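(* For every $n\in\mathbb{N}$, every valuation $\mathcal V$, every nonempty chain $c_s$ over $[n]$ and all formulas $\varphi,\psi$: (i) $\varphi^{\mathcal V}\vdash_{(n)}(\neg_{c_s}\varphi)^{\mathcal V}$; (ii) $\varphi^{\mathcal V},\psi^{\mathcal V}\vdash_{(n)}(\varphi\to_{(n)}\psi)^{\mathcal V}$.
   Context: Fix $n\in\mathbb{N}$, $n\ge 1$, and write $[n]=\{1,\dots,n\}$. Chains: a chain over $[n]$ is a finite sequence of distinct elements of $[n]$; chains with the same length and the same symbols are identified, so a chain is effectively a subset of $[n]$. $c_k$ denotes a chain with $k$ symbols, $\epsilon$ the empty chain, and $(n)$ the chain consisting of all symbols of $[n]$. For chains $c,d$: the concatenation $c\cdot d$ is the chain of symbols occurring in $c$ or in $d$; the coconcatenation $c\otimes d$ is the chain of symbols occurring in exactly one of $c,d$; $d$ is a subchain of $c$ if every symbol of $d$ is a symbol of $c$. The complementary chain $c'_{n-k}$ of $c_k$ is the chain of the symbols of $[n]$ not occurring in $c_k$. Language of $\mathbf{CPN}_n$: a countable set $P_n$ of propositional letters; constants $\perp_c$ for each chain $c$ over $[n]$ with $1\le |c|\le n-1$, and constants $\perp_{(n)}$ (contradiction) and $\top_{(n)}$ (truth); a unary connective $\neg_c$ for each nonempty chain $c$ over $[n]$ ($\neg_{(n)}$ is the strong negation; the $\neg_c$ with $|c|\le n-1$ are weak negations); a binary connective $\to_{(n)}$. Formulas: propositional letters and constants are formulas; if $\varphi,\psi$ are formulas then so are $\neg_c\varphi$ and $(\varphi\to_{(n)}\psi)$.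 Conventions: $\neg_\epsilon\varphi:=\varphi$, $\perp_\epsilon:=\top_{(n)}$, and $\perp_c$ for $c=(n)$ means $\perp_{(n)}$. Abbreviations: $\varphi\wedge_{(n)}\psi:=\neg_{(n)}(\varphi\to_{(n)}\neg_{(n)}\psi)$, $\varphi\vee_{(n)}\psi:=\neg_{(n)}\varphi\to_{(n)}\psi$, $\varphi\leftrightarrow_{(n)}\psi:=(\varphi\to_{(n)}\psi)\wedge_{(n)}(\psi\to_{(n)}\varphi)$. Axioms of $\mathbf{CPN}_n$, for all formulas $\varphi,\psi,\chi$ and all nonempty chains $c_k,c_r$ over $[n]$: (A1) $\varphi\to_{(n)}(\psi\to_{(n)}\varphi)$; (A2) $(\varphi\to_{(n)}(\psi\to_{(n)}\chi))\to_{(n)}((\varphi\to_{(n)}\psi)\to_{(n)}(\varphi\to_{(n)}\chi))$; (A3) $(\neg_{(n)}\psi\to_{(n)}\neg_{(n)}\varphi)\to_{(n)}((\neg_{(n)}\psi\to_{(n)}\varphi)\to_{(n)}\psi)$; (A4) $\varphi\to_{(n)}(\perp_{c_k}\to_{(n)}\neg_{c_k}\varphi)$; (A5) $\neg_{c_k}\neg_{c_r}\varphi\leftrightarrow_{(n)}\neg_{c_k\otimes c_r}\varphi$; (A6) $\neg_{c_k}\perp_{c_r}\leftrightarrow_{(n)}\perp_{c_k\otimes c_r}$; (A7) $\perp_{c_k}\to_{(n)}\perp_{c_r}$, whenever $c_r$ is a subchain of $c_k$. The only rule of inference is modus ponens (from $\varphi$ and $\varphi\to_{(n)}\psi$ infer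 $\psi$). For a set $\Sigma$ of formulas, $\Sigma\vdash_{(n)}\varphi$ means there is a finite sequence of formulas ending with $\varphi$, each of which is an axiom, a member of $\Sigma$, or obtained from two earlier members by modus ponens; $\vdash_{(n)}\varphi$ means $\emptyset\vdash_{(n)}\varphi$. Semantics: for each $i\in[n]$ there is a world $\mathcal M_i=\{T_i,F_i\}$ (pairwise disjoint sets). A valuation $\mathcal V$ assigns to each propositional letter $p$ and each $i\in[n]$ a value $v_i(p)\in\mathcal M_i$ (independently for different $i$). It extends to all formulas, for each $i$, by: $\bar v_i(p)=v_i(p)$ for letters; $\bar v_i(\perp_c)=F_i$ if $i$ is a symbol of $c$ and $T_i$ otherwise (so $\bar v_i(\perp_{(n)})=F_i$ and $\bar v_i(\top_{(n)})=T_i$); $\bar v_i(\neg_c\varphi)=\bar v_i(\varphi)$ if $i$ is not a symbol of $c$, and the opposite value ($T_i\leftrightarrow F_i$) if $i$ is a symbol of $c$; $\bar v_i(\varphi\to_{(n)}\psi)=F_i$ iff $\bar v_i(\varphi)=T_i$ and $\bar v_i(\psi)=F_i$, otherwise $T_i$ (hence $\wedge_{(n)},\vee_{(n)}$ behave classically in each world). Write $\bar{\mathcal V}(\varphi)=(\bar v_1(\varphi),\dots,\bar v_n(\varphi))$. A formula $\varphi$ is a tautology, written $\models_{(n)}\varphi$, iff $\bar{\mathcal V}(\varphi)=(T_1,\dots,T_n)$ for every valuation $\mathcal V$. Given a valuation $\mathcal V$ and a chain $c$ over $[n]$ (possibly empty), a formula $\varphi$ is $c$-contingent (under $\mathcal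 V$) if $\bar v_i(\varphi)=F_i$ for every symbol $i$ of $c$ and $\bar v_i(\varphi)=T_i$ for every $i\in[n]$ not in $c$. Every formula is $c$-contingent for exactly one chain $c$, and one sets $\varphi^{\mathcal V}:=\neg_c\varphi$ for that $c$ (so $\varphi^{\mathcal V}=\varphi$ when $\bar{\mathcal V}(\varphi)=(T_1,\dots,T_n)$). *)

theory Defs
  imports Main
begin

text \<open>Chains over [n] are represented as subsets of {1..n} (sequences with the same
symbols are identified). Formulas of CPN_n:\<close>

datatype form =
    PVar nat
  | Bot "nat set"         (* \<bottom>_c ; Bot {} = \<top>_(n), Bot {1..n} = \<bottom>_(n) *)
  | Neg "nat set" form
  | Imp form form

definition chain :: "nat \<Rightarrow> nat set \<Rightarrow> bool" where
  "chain n c \<longleftrightarrow> c \<subseteq> {1..n}"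

definition full :: "nat \<Rightarrow> nat set" where
  "full n = {1..n}"

fun wf :: "nat \<Rightarrow> form \<Rightarrow> bool" where
  "wf n (PVar p) = True"
| "wf n (Bot c) = chain n c"
| "wf n (Neg c \<phi>) = (chain n c \<and> c \<noteq> {} \<and> wf n \<phi>)"
| "wf n (Imp \<phi> \<psi>) = (wf n \<phi> \<and> wf n \<psi>)"

definition neg :: "nat set \<Rightarrow> form \<Rightarrow> form" where
  "neg c \<phi> = (if c = {} then \<phi> else Neg c \<phi>)"

definition coconc :: "nat set \<Rightarrow> nat set \<Rightarrow> nat set" where
  "coconc c d = (c - d) \<union> (d - c)"

definition Conj :: "nat \<Rightarrow> form \<Rightarrow> form \<Rightarrow> form" where
  "Conj n \<phi> \<psi> = Neg (full n) (Imp \<phi> (Neg (full n) \<psi>))"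

definition Iff :: "nat \<Rightarrow> form \<Rightarrow> form \<Rightarrow> form" where
  "Iff n \<phi> \<psi> = Conj n (Imp \<phi> \<psi>) (Imp \<psi> \<phi>)"

inductive axiom :: "nat \<Rightarrow> form \<Rightarrow> bool" for n where
  A1: "\<lbrakk>wf n \<phi>; wf n \<psi>\<rbrakk> \<Longrightarrow> axiom n (Imp \<phi> (Imp \<psi> \<phi>))"
| A2: "\<lbrakk>wf n \<phi>; wf n \<psi>; wf n \<chi>\<rbrakk> \<Longrightarrow>
     axiom n (Imp (Imp \<phi> (Imp \<psi> \<chi>)) (Imp (Imp \<phi> \<psi>) (Imp \<phi> \<chi>)))"
| A3: "\<lbrakk>wf n \<phi>; wf n \<psi>\<rbrakk> \<Longrightarrow>
     axiom n (Imp (Imp (Neg (full n) \<psi>) (Neg (full n) \<phi>))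
                  (Imp (Imp (Neg (full n) \<psi>) \<phi>) \<psi>))"
| A4: "\<lbrakk>wf n \<phi>; chain n ck; ck \<noteq> {}\<rbrakk> \<Longrightarrow>
     axiom n (Imp \<phi> (Imp (Bot ck) (Neg ck \<phi>)))"
| A5: "\<lbrakk>wf n \<phi>; chain n ck; ck \<noteq> {}; chain n cr; cr \<noteq> {}\<rbrakk> \<Longrightarrow>
     axiom n (Iff n (Neg ck (Neg cr \<phi>)) (neg (coconc ck cr) \<phi>))"
| A6: "\<lbrakk>chain n ck; ck \<noteq> {}; chain n cr; cr \<noteq> {}\<rbrakk> \<Longrightarrow>
     axiom n (Iff n (Neg ck (Bot cr)) (Bot (coconc ck cr)))"
| A7: "\<lbrakk>chain n ck; ck \<noteq> {}; chain n cr; cr \<noteq> {}; cr \<subseteq> ck\<rbrakk> \<Longrightarrow>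
     axiom n (Imp (Bot ck) (Bot cr))"

inductive derives :: "nat \<Rightarrow> form set \<Rightarrow> form \<Rightarrow> bool" for n \<Sigma> where
  ax: "axiom n \<phi> \<Longrightarrow> derives n \<Sigma> \<phi>"
| hyp: "\<phi> \<in> \<Sigma> \<Longrightarrow> derives n \<Sigma> \<phi>"
| mp: "\<lbrakk>derives n \<Sigma> \<phi>; derives n \<Sigma> (Imp \<phi> \<psi>)\<rbrakk> \<Longrightarrow> derives n \<Sigma> \<psi>"

text \<open>Semantics: a valuation assigns to each letter p and world i a truth value
(True = T_i, False = F_i).\<close>
type_synonym valuation = "nat \<Rightarrow> nat \<Rightarrow> bool"

fun eval :: "valuation \<Rightarrow> nat \<Rightarrow> form \<Rightarrow> bool" where
  "eval v i (PVar p) = v p i"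
| "eval v i (Bot c) = (i \<notin> c)"
| "eval v i (Neg c \<phi>) = (if i \<in> c then \<not> eval v i \<phi> else eval v i \<phi>)"
| "eval v i (Imp \<phi> \<psi>) = (eval v i \<phi> \<longrightarrow> eval v i \<psi>)"

text \<open>The unique chain c for which \<phi> is c-contingent under v.\<close>
definition contchain :: "nat \<Rightarrow> valuation \<Rightarrow> form \<Rightarrow> nat set" where
  "contchain n v \<phi> = {i \<in> {1..n}. \<not> eval v i \<phi>}"

definition vform :: "nat \<Rightarrow> valuation \<Rightarrow> form \<Rightarrow> form" where
  "vform n v \<phi> = neg (contchain n v \<phi>) \<phi>"

end

theory Submission
  imports Defs
begin

locale cpn =
  fixes n :: nat
  assumes n1: "1 \<le> n"
begin

abbreviation N :: "form \<Rightarrow> form" where "N X \<equiv> Neg (full n) X"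

definition wfs :: "form set \<Rightarrow> bool" where "wfs S \<longleftrightarrow> (\<forall>x\<in>S. wf n x)"

lemma full_ne[simp]: "full n \<noteq> {}" using n1 by (auto simp: full_def)
lemma full_chain[simp]: "chain n (full n)" by (simp add: chain_def full_def)

lemma wfN[simp]: "wf n (N X) = wf n X" using full_ne full_chain by simp

lemma chain_coconc: "chain n a \<Longrightarrow> chain n b \<Longrightarrow> chain n (coconc a b)"
  by (auto simp: chain_def coconc_def)

lemma wf_neg: "chain n c \<Longrightarrow> wf n X \<Longrightarrow> wf n (neg c X)"
  by (simp add: neg_def)

lemma axiom_wf: "axiom n \<phi> \<Longrightarrow> wf n \<phi>"
  by (induction rule: axiom.induct)
     (auto simp: Iff_def Conj_def chain_coconc wf_neg full_chain full_ne)

lemma wfs_insert[simp]: "wfs (insert A S) = (wf n A \<and> wfs S)"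
  by (simp add: wfs_def)

lemma derives_wf: "derives n S X \<Longrightarrow> wfs S \<Longrightarrow> wf n X"
  by (induction rule: derives.induct) (auto simp: axiom_wf wfs_def)

lemma MP: "derives n S A \<Longrightarrow> derives n S (Imp A B) \<Longrightarrow> derives n S B"
  by (rule derives.mp)

lemma H: "A \<in> S \<Longrightarrow> derives n S A" by (rule derives.hyp)

lemma a1: "wf n \<phi> \<Longrightarrow> wf n \<psi> \<Longrightarrow> derives n S (Imp \<phi> (Imp \<psi> \<phi>))"
  by (intro derives.ax axiom.A1)
lemma a2: "wf n \<phi> \<Longrightarrow> wf n \<psi> \<Longrightarrow> wf n \<chi> \<Longrightarrow>
  derives n S (Imp (Imp \<phi> (Imp \<psi> \<chi>)) (Imp (Imp \<phi> \<psi>) (Imp \<phi> \<chi>)))"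
  by (intro derives.ax axiom.A2)
lemma a3: "wf n \<phi> \<Longrightarrow> wf n \<psi> \<Longrightarrow>
  derives n S (Imp (Imp (N \<psi>) (N \<phi>)) (Imp (Imp (N \<psi>) \<phi>) \<psi>))"
  by (intro derives.ax axiom.A3)
lemma a4: "wf n \<phi> \<Longrightarrow> chain n ck \<Longrightarrow> ck \<noteq> {} \<Longrightarrow>
  derives n S (Imp \<phi> (Imp (Bot ck) (Neg ck \<phi>)))"
  by (intro derives.ax axiom.A4)
lemma a5: "wf n \<phi> \<Longrightarrow> chain n ck \<Longrightarrow> ck \<noteq> {} \<Longrightarrow> chain n cr \<Longrightarrow> cr \<noteq> {} \<Longrightarrow>
  derives n S (Iff n (Neg ck (Neg cr \<phi>)) (neg (coconc ck cr) \<phi>))"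
  by (intro derives.ax axiom.A5)
lemma a6: "chain n ck \<Longrightarrow> ck \<noteq> {} \<Longrightarrow> chain n cr \<Longrightarrow> cr \<noteq> {} \<Longrightarrow>
  derives n S (Iff n (Neg ck (Bot cr)) (Bot (coconc ck cr)))"
  by (intro derives.ax axiom.A6)
lemma a7: "chain n ck \<Longrightarrow> ck \<noteq> {} \<Longrightarrow> chain n cr \<Longrightarrow> cr \<noteq> {} \<Longrightarrow> cr \<subseteq> ck \<Longrightarrow>
  derives n S (Imp (Bot ck) (Bot cr))"
  by (intro derives.ax axiom.A7)

lemma refl: "wf n A \<Longrightarrow> derives n S (Imp A A)"
proof -
  assume w: "wf n A"
  have "derives n S (Imp (Imp A (Imp (Imp A A) A)) (Imp (Imp A (Imp A A)) (Imp A A)))"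
    using w by (intro a2) auto
  moreover have "derives n S (Imp A (Imp (Imp A A) A))" using w by (intro a1) auto
  moreover have "derives n S (Imp A (Imp A A))" using w by (intro a1) auto
  ultimately show ?thesis by (meson MP)
qed

lemma deduction:
  assumes "derives n (insert A S) B" "wf n A" "wfs S"
  shows "derives n S (Imp A B)"
  using assms(1)
proof induction
  case (ax \<phi>)
  then show ?case using axiom_wf[OF ax] assms(2) by (meson MP a1 derives.ax)
next
  case (hyp \<phi>)
  then show ?case
  proof (cases "\<phi> = A")
    case True then show ?thesis using refl assms(2) by simp
  next
    case False then have "\<phi> \<in> S" using hyp by simp
    moreover have "wf n \<phi>" using \<open>\<phi> \<in> S\<close> assms(3) by (simp add: wfs_def)
    ultimately show ?thesis using assms(2) by (meson H MP a1)
  qed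
next
  case (mp \<phi> \<psi>)
  have w: "wf n \<phi>" "wf n (Imp \<phi> \<psi>)"
    using derives_wf[OF mp.hyps(1)] derives_wf[OF mp.hyps(2)] assms(2,3) by auto
  then have "wf n \<psi>" by simp
  then show ?case using w mp.IH assms(2) a2[of A \<phi> \<psi> S] by (meson MP)
qed

lemma dne: assumes "derives n S (N (N B))" "wfs S" shows "derives n S B"
proof -
  have w: "wf n B" using derives_wf[OF assms] by simp
  have "derives n S (Imp (Imp (N B) (N (N B))) (Imp (Imp (N B) (N B)) B))"
    using w by (intro a3) auto
  moreover have "derives n S (Imp (N B) (N (N B)))"
    using assms w by (meson MP a1 wfN)
  moreover have "derives n S (Imp (N B) (N B))" using w refl by simp
  ultimately show ?thesis by (meson MP)
qed

lemma dni: assumes "derives n S B" "wfs S" shows "derives n S (N (N B))"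
proof -
  have w: "wf n B" using derives_wf[OF assms] by simp
  have "derives n S (Imp (Imp (N (N (N B))) (N B)) (Imp (Imp (N (N (N B))) B) (N (N B))))"
    using w by (intro a3) auto
  moreover have "derives n S (Imp (N (N (N B))) (N B))"
    by (rule deduction, rule dne, rule H) (auto simp: w assms)
  moreover have "derives n S (Imp (N (N (N B))) B)"
    using assms w by (meson MP a1 wfN)
  ultimately show ?thesis by (meson MP)
qed

lemma efq: assumes "derives n S (N A)" "derives n S A" "wf n B" "wfs S"
  shows "derives n S B"
proof -
  have w: "wf n A" using derives_wf[OF assms(2,4)] by simp
  have "derives n S (Imp (Imp (N B) (N A)) (Imp (Imp (N B) A) B))"
    using w assms by (intro a3) auto
  moreover have "derives n S (Imp (N B) (N A))" using assms w by (meson MP a1 wfN)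
  moreover have "derives n S (Imp (N B) A)" using assms w by (meson MP a1 wfN)
  ultimately show ?thesis by (meson MP)
qed

lemma weaken: "derives n S B \<Longrightarrow> S \<subseteq> T \<Longrightarrow> derives n T B"
  by (induction rule: derives.induct) (auto intro: derives.intros)

lemma wk: "derives n S B \<Longrightarrow> derives n (insert A S) B"
  by (erule weaken) auto

lemma contra: assumes "derives n S (Imp (N B) (N A))" "wf n A" "wf n B" "wfs S"
  shows "derives n S (Imp A B)"
proof (rule deduction[OF _ assms(2,4)])
  let ?S = "insert A S"
  have "derives n ?S (Imp (Imp (N B) (N A)) (Imp (Imp (N B) A) B))"
    using assms by (intro a3) auto
  moreover have "derives n ?S (Imp (N B) (N A))" using assms(1) by (rule wk)
  moreover have "derives n ?S (Imp (N B) A)" using assms by (meson MP a1 wfN H insertI1)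
  ultimately show "derives n ?S B" by (meson MP)
qed

lemma contra2: assumes "derives n S (Imp A B)" "wfs S"
  shows "derives n S (Imp (N B) (N A))"
proof -
  have w: "wf n A" "wf n B" using derives_wf[OF assms] by auto
  have "derives n S (Imp (N (N A)) (N (N B)))"
  proof (rule deduction)
    let ?S = "insert (N (N A)) S"
    have "derives n ?S A" by (rule dne) (auto intro: H simp: w assms)
    then have "derives n ?S B" using wk[OF assms(1)] MP by blast
    then show "derives n ?S (N (N B))" by (rule dni) (simp add: w assms)
  qed (auto simp: w assms)
  then show ?thesis by (rule contra) (auto simp: w assms)
qed

lemma cases: assumes "derives n S (Imp A B)" "derives n S (Imp (N A) B)" "wfs S"
  shows "derives n S B"
proof -
  have w: "wf n A" "wf n B" using derives_wf[OF assms(1,3)] by auto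
  have "derives n S (Imp (Imp (N B) (N (N A))) (Imp (Imp (N B) (N A)) B))"
    using w by (intro a3) auto
  moreover have "derives n S (Imp (N B) (N (N A)))" using contra2 assms by blast
  moreover have "derives n S (Imp (N B) (N A))" using contra2 assms by blast
  ultimately show ?thesis by (meson MP)
qed

lemma conjE2: assumes "derives n S (Conj n P Q)" "wfs S" shows "derives n S Q"
proof -
  have w: "wf n P" "wf n Q" using derives_wf[OF assms] by (auto simp: Conj_def)
  have "derives n S (Imp (N Q) (Imp P (N Q)))" using w by (intro a1) auto
  then have "derives n S (Imp (N (Imp P (N Q))) (N (N Q)))" using contra2 assms by blast
  then have "derives n S (N (N Q))" using assms MP unfolding Conj_def by blast
  then show ?thesis using dne assms by blast
qed

lemma conjE1: assumes "derives n S (Conj n P Q)" "wfs S" shows "derives n S P"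
proof -
  have w: "wf n P" "wf n Q" using derives_wf[OF assms] by (auto simp: Conj_def)
  have "derives n S (Imp (N P) (Imp P (N Q)))"
  proof (rule deduction)
    show "derives n (insert (N P) S) (Imp P (N Q))"
    proof (rule deduction)
      show "derives n (insert P (insert (N P) S)) (N Q)"
        by (rule efq[of _ P]) (auto intro: H simp: w assms)
    qed (auto simp: w assms)
  qed (auto simp: w assms)
  then have "derives n S (Imp (N (Imp P (N Q))) (N (N P)))" using contra2 assms by blast
  then have "derives n S (N (N P))" using assms MP unfolding Conj_def by blast
  then show ?thesis using dne assms by blast
qed

lemma iffE: assumes "derives n S (Iff n X Y)" "derives n S Y" "wfs S" shows "derives n S X"
  using conjE2[OF assms(1)[unfolded Iff_def] assms(3)] assms(2) MP by blast

lemma iffE1: assumes "derives n S (Iff n X Y)" "derives n S X" "wfs S" shows "derives n S Y"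
  using conjE1[OF assms(1)[unfolded Iff_def] assms(3)] assms(2) MP by blast

lemma coconc_self: "coconc c c = {}" by (simp add: coconc_def)

lemma B_top: assumes "wfs S" shows "derives n S (Bot {})"
proof -
  let ?F = "Bot (full n)"
  have "derives n S (Imp ?F (N ?F))"
  proof (rule deduction)
    let ?S = "insert ?F S"
    have "derives n ?S (Imp ?F (Imp ?F (N ?F)))" by (intro a4) auto
    then show "derives n ?S (N ?F)" using H[of ?F ?S] MP by blast
  qed (auto simp: assms)
  moreover have "derives n S (Imp (N ?F) (N ?F))" by (rule refl) simp
  ultimately have "derives n S (N ?F)" using cases assms by blast
  moreover have "derives n S (Iff n (N ?F) (Bot (coconc (full n) (full n))))"
    by (intro a6) auto
  ultimately show ?thesis using iffE1 assms by (simp add: coconc_self)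
qed

lemma B_mono: assumes "chain n p" "r \<subseteq> p" "derives n S (Bot p)" "wfs S"
  shows "derives n S (Bot r)"
proof (cases "r = {}")
  case True then show ?thesis using B_top assms by simp
next
  case False
  have "chain n r" using assms by (auto simp: chain_def)
  then have "derives n S (Imp (Bot p) (Bot r))" using False assms by (intro a7) auto
  then show ?thesis using assms MP by blast
qed

lemma B_union: assumes "chain n p" "chain n q" "derives n S (Bot p)" "derives n S (Bot q)" "wfs S"
  shows "derives n S (Bot (p \<union> q))"
proof (cases "q = {} \<or> p - q = {}")
  case True
  then have "p \<union> q = p \<or> p \<union> q = q" by auto
  then show ?thesis using assms by auto
next
  case False
  have c: "chain n (p - q)" using assms by (auto simp: chain_def)
  have b: "derives n S (Bot (p - q))" using B_mono[OF assms(1) _ assms(3,5)] by blast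
  have "derives n S (Imp (Bot (p - q)) (Imp (Bot q) (Neg q (Bot (p - q)))))"
    using False c assms by (intro a4) auto
  then have "derives n S (Neg q (Bot (p - q)))" using b assms(4) MP by blast
  moreover have "derives n S (Iff n (Neg q (Bot (p - q))) (Bot (coconc q (p - q))))"
    using False c assms by (intro a6) auto
  moreover have "coconc q (p - q) = p \<union> q" by (auto simp: coconc_def)
  ultimately show ?thesis using iffE1[OF _ _ assms(5)] by simp
qed

lemma B_compl: assumes "chain n c" "derives n S (N (Bot c))" "wfs S"
  shows "derives n S (Bot (full n - c))"
proof (cases "c = {}")
  case True
  then show ?thesis using efq[OF assms(2)[unfolded True] B_top] assms by (simp add: full_def chain_def)
next
  case False
  have "derives n S (Iff n (N (Bot c)) (Bot (coconc (full n) c)))"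
    using False assms by (intro a6) auto
  moreover have "coconc (full n) c = full n - c" using assms(1)
    by (auto simp: coconc_def chain_def full_def)
  ultimately show ?thesis using iffE1[OF _ assms(2) assms(3)] by simp
qed

lemma negE: assumes "derives n S (neg c X)" "chain n c" "wf n X" "wfs S"
  shows "derives n S (Imp X (Bot c)) \<and> derives n S (Imp (Bot c) X)"
proof (cases "c = {}")
  case True
  then have x: "derives n S X" using assms by (simp add: neg_def)
  have wb: "wf n (Bot {})" by (simp add: chain_def)
  have "derives n S (Imp X (Bot {}))"
    using MP[OF B_top[OF assms(4)] a1[OF wb assms(3)]] .
  moreover have "derives n S (Imp (Bot {}) X)" using MP[OF x a1[OF assms(3) wb]] .
  ultimately show ?thesis using True by simp
next
  case False
  have h: "derives n S (Neg c X)" using assms False by (simp add: neg_def)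
  have wc: "wf n (Bot c)" "wf n (Neg c X)" using assms False by auto
  have 1: "derives n S (Imp (Bot c) X)"
  proof (rule deduction)
    let ?S = "insert (Bot c) S"
    have "derives n ?S (Imp (Neg c X) (Imp (Bot c) (Neg c (Neg c X))))"
      using wc assms False by (intro a4) auto
    then have "derives n ?S (Neg c (Neg c X))" using wk[OF h] H[of "Bot c" ?S] MP by blast
    moreover have "derives n ?S (Iff n (Neg c (Neg c X)) (neg (coconc c c) X))"
      using assms False by (intro a5) auto
    moreover have "neg (coconc c c) X = X" by (simp add: coconc_self neg_def)
    moreover have "wfs ?S" using wc assms by simp
    ultimately show "derives n ?S X" using iffE1 by metis
  qed (use wc assms in auto)
  have "derives n S (Imp (N (Bot c)) (N X))"
  proof (rule deduction)
    let ?S = "insert (N (Bot c)) S"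
    have ws: "wfs ?S" using wc assms by simp
    have b: "derives n ?S (Bot (full n - c))" using B_compl[OF assms(2) H ws] by simp
    show "derives n ?S (N X)"
    proof (cases "full n - c = {}")
      case True
      then have "c = full n" using assms(2) by (auto simp: chain_def full_def)
      then show ?thesis using wk[OF h] by simp
    next
      case F2: False
      have cc: "chain n (full n - c)" by (auto simp: chain_def full_def)
      have "derives n ?S (Imp (Neg c X) (Imp (Bot (full n - c)) (Neg (full n - c) (Neg c X))))"
        using wc cc F2 by (intro a4) auto
      then have "derives n ?S (Neg (full n - c) (Neg c X))" using wk[OF h] b MP by blast
      moreover have "derives n ?S (Iff n (Neg (full n - c) (Neg c X)) (neg (coconc (full n - c) c) X))"
        using assms False cc F2 by (intro a5) auto
      moreover have "coconc (full n - c) c = full n" using assms(2)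
        by (auto simp: coconc_def chain_def full_def)
      moreover have "neg (full n) X = N X" by (simp add: neg_def)
      ultimately show ?thesis using iffE1[OF _ _ ws] by simp
    qed
  qed (use wc assms in auto)
  then have "derives n S (Imp X (Bot c))" using contra wc assms by blast
  with 1 show ?thesis by simp
qed

lemma negI: assumes "derives n S (Imp X (Bot c))" "derives n S (Imp (Bot c) X)"
   "chain n c" "wf n X" "wfs S"
  shows "derives n S (neg c X)"
proof (cases "c = {}")
  case True
  then show ?thesis using MP[OF B_top[OF assms(5)]] assms(2) by (simp add: neg_def)
next
  case False
  have wc: "wf n (Bot c)" "wf n (Neg c X)" using assms False by auto
  have "derives n S (Imp (Bot c) (Neg c X))"
  proof (rule deduction)
    let ?S = "insert (Bot c) S"
    have x: "derives n ?S X" using wk[OF assms(2)] H[of "Bot c" ?S] MP by blast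
    have "derives n ?S (Imp X (Imp (Bot c) (Neg c X)))" using assms False by (intro a4) auto
    then show "derives n ?S (Neg c X)" using x H[of "Bot c" ?S] MP by blast
  qed (use wc assms in auto)
  moreover have "derives n S (Imp (N (Bot c)) (Neg c X))"
  proof (rule deduction)
    let ?S = "insert (N (Bot c)) S"
    have ws: "wfs ?S" using wc assms by simp
    have b: "derives n ?S (Bot (full n - c))" using B_compl[OF assms(3) H ws] by simp
    have nx: "derives n ?S (N X)"
      using contra2[OF assms(1) assms(5)] H[of "N (Bot c)" ?S] wk MP by blast
    show "derives n ?S (Neg c X)"
    proof (cases "full n - c = {}")
      case True
      then have "c = full n" using assms(3) by (auto simp: chain_def full_def)
      then show ?thesis using nx by simp
    next
      case F2: False
      have cc: "chain n (full n - c)" by (auto simp: chain_def full_def)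
      have "derives n ?S (Imp (N X) (Imp (Bot (full n - c)) (Neg (full n - c) (N X))))"
        using assms cc F2 by (intro a4) auto
      then have "derives n ?S (Neg (full n - c) (N X))" using nx b MP by blast
      moreover have "derives n ?S (Iff n (Neg (full n - c) (N X)) (neg (coconc (full n - c) (full n)) X))"
        using assms cc F2 by (intro a5) auto
      moreover have "coconc (full n - c) (full n) = c" using assms(3)
        by (auto simp: coconc_def chain_def full_def)
      moreover have "neg c X = Neg c X" using False by (simp add: neg_def)
      ultimately show ?thesis using iffE1[OF _ _ ws] by simp
    qed
  qed (use wc assms in auto)
  then have "derives n S (Neg c X)" using cases[OF calculation _ assms(5)] by blast
  then show ?thesis using False by (simp add: neg_def)
qed

lemma cc_chain: "chain n (contchain n v \<phi>)" by (auto simp: chain_def contchain_def)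

lemma cc_neg: "chain n c \<Longrightarrow> contchain n v (Neg c \<phi>) = coconc (contchain n v \<phi>) c"
  by (auto simp: chain_def contchain_def coconc_def)

lemma cc_imp: "contchain n v (Imp \<phi> \<psi>) = contchain n v \<psi> - contchain n v \<phi>"
  by (auto simp: contchain_def)

lemma part1: assumes "chain n c" "c \<noteq> {}" "wf n \<phi>"
  shows "derives n {vform n v \<phi>} (vform n v (Neg c \<phi>))"
proof -
  let ?a = "contchain n v \<phi>"
  let ?S = "{neg ?a \<phi>}"
  have ws: "wfs ?S" using wf_neg[OF cc_chain assms(3)] by (simp add: wfs_def)
  have h: "derives n ?S (neg ?a \<phi>)" by (rule H) simp
  have t: "vform n v (Neg c \<phi>) = neg (coconc ?a c) (Neg c \<phi>)"
    using cc_neg[OF assms(1)] by (simp add: vform_def)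
  show ?thesis
  proof (cases "coconc ?a c = {}")
    case True
    then have "?a = c" by (auto simp: coconc_def)
    then show ?thesis using t True h assms(2) by (simp add: vform_def neg_def)
  next
    case False
    have "derives n ?S (Iff n (Neg (coconc ?a c) (Neg c \<phi>)) (neg (coconc (coconc ?a c) c) \<phi>))"
      using False assms by (intro a5 chain_coconc cc_chain) auto
    moreover have "coconc (coconc ?a c) c = ?a" by (auto simp: coconc_def)
    ultimately have "derives n ?S (Neg (coconc ?a c) (Neg c \<phi>))" using iffE[OF _ h ws] by simp
    then show ?thesis using t False by (simp add: vform_def neg_def)
  qed
qed

lemma part2: assumes "wf n \<phi>" "wf n \<psi>"
  shows "derives n {vform n v \<phi>, vform n v \<psi>} (vform n v (Imp \<phi> \<psi>))"
proof -
  let ?a = "contchain n v \<phi>"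
  let ?b = "contchain n v \<psi>"
  let ?d = "?b - ?a"
  let ?S = "{neg ?a \<phi>, neg ?b \<psi>}"
  have ca: "chain n ?a" and cb: "chain n ?b" by (rule cc_chain)+
  have cd: "chain n ?d" using cb by (auto simp: chain_def)
  have ws: "wfs ?S" using wf_neg[OF ca assms(1)] wf_neg[OF cb assms(2)] by (simp add: wfs_def)
  have "derives n ?S (neg ?a \<phi>)" by (rule H) simp
  then have A: "derives n ?S (Imp \<phi> (Bot ?a))" "derives n ?S (Imp (Bot ?a) \<phi>)"
    using negE[OF _ ca assms(1) ws] by auto
  have "derives n ?S (neg ?b \<psi>)" by (rule H) simp
  then have B: "derives n ?S (Imp \<psi> (Bot ?b))" "derives n ?S (Imp (Bot ?b) \<psi>)"
    using negE[OF _ cb assms(2) ws] by auto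
  have wba: "wf n (Bot ?a)" "wf n (Bot ?d)" "wf n (Imp \<phi> \<psi>)" using ca cd assms by auto
  have 1: "derives n ?S (Imp (Bot ?d) (Imp \<phi> \<psi>))"
  proof (rule deduction)
    let ?S1 = "insert (Bot ?d) ?S"
    have ws1: "wfs ?S1" using ws wba by simp
    show "derives n ?S1 (Imp \<phi> \<psi>)"
    proof (rule deduction)
      let ?S2 = "insert \<phi> ?S1"
      have ws2: "wfs ?S2" using ws1 assms by simp
      have p: "derives n ?S2 \<phi>" by (rule H) simp
      have ba: "derives n ?S2 (Bot ?a)" using MP[OF p wk[OF wk[OF A(1)]]] .
      have bd: "derives n ?S2 (Bot ?d)" by (rule H) simp
      have "derives n ?S2 (Bot (?a \<union> ?d))" using B_union[OF ca cd ba bd ws2] .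
      moreover have "chain n (?a \<union> ?d)" using ca cd by (auto simp: chain_def)
      ultimately have "derives n ?S2 (Bot ?b)" using B_mono[of "?a \<union> ?d" ?b ?S2] ws2 by blast
      then show "derives n ?S2 \<psi>" using MP wk[OF wk[OF B(2)]] by blast
    qed (use ws1 assms in auto)
  qed (use ws wba in auto)
  have 2: "derives n ?S (Imp (Imp \<phi> \<psi>) (Bot ?d))"
  proof (rule deduction)
    let ?S1 = "insert (Imp \<phi> \<psi>) ?S"
    have ws1: "wfs ?S1" using ws wba by simp
    have i: "derives n ?S1 (Imp \<phi> \<psi>)" by (rule H) simp
    have c1: "derives n ?S1 (Imp (Bot ?a) (Bot ?d))"
    proof (rule deduction)
      let ?S2 = "insert (Bot ?a) ?S1"
      have ws2: "wfs ?S2" using ws1 wba by simp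
      have "derives n ?S2 \<phi>" using MP[OF H wk[OF wk[OF A(2)]]] by simp
      then have "derives n ?S2 \<psi>" using MP wk[OF i] by blast
      then have "derives n ?S2 (Bot ?b)" using MP wk[OF wk[OF B(1)]] by blast
      then show "derives n ?S2 (Bot ?d)" using B_mono[OF cb, of ?d ?S2] ws2 by blast
    qed (use ws1 wba in auto)
    have c2: "derives n ?S1 (Imp (N (Bot ?a)) (Bot ?d))"
    proof (rule deduction)
      let ?S2 = "insert (N (Bot ?a)) ?S1"
      have ws2: "wfs ?S2" using ws1 wba by simp
      have "derives n ?S2 (Bot (full n - ?a))" using B_compl[OF ca H ws2] by simp
      moreover have "chain n (full n - ?a)" "?d \<subseteq> full n - ?a"
        using cb by (auto simp: chain_def full_def)
      ultimately show "derives n ?S2 (Bot ?d)" using B_mono[of "full n - ?a" ?d ?S2] ws2 by blast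
    qed (use ws1 wba in auto)
    show "derives n ?S1 (Bot ?d)" using cases[OF c1 c2 ws1] .
  qed (use ws wba in auto)
  have "derives n ?S (neg ?d (Imp \<phi> \<psi>))" using negI[OF 2 1 cd wba(3) ws] .
  then show ?thesis by (simp add: vform_def cc_imp)
qed

end

theorem mainTheorem13:
  fixes n :: nat and v :: valuation and c :: "nat set" and \<phi> \<psi> :: form
  assumes "n \<ge> 1" and "chain n c" and "c \<noteq> {}" and "wf n \<phi>" and "wf n \<psi>"
  shows "derives n {vform n v \<phi>} (vform n v (Neg c \<phi>)) \<and>
         derives n {vform n v \<phi>, vform n v \<psi>} (vform n v (Imp \<phi> \<psi>))"
proof -
  interpret cpn n using assms(1) by unfold_locales
  show ?thesis using part1[OF assms(2,3,4)] part2[OF assms(4,5)] by blast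
qed

end
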